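(* For every $\theta\in\mathcal{P}$ there exists $\beta\in\mathcal{KL}$ such that the following holds. Let $t_0\ge0$, $\tau\in(0,\infty]$, let $\omega:[t_0,t_0+\tau)\to\mathbb{R}_+$ be continuous, and let $\eta:[t_0,t_0+\tau)\to\mathbb{R}_+$ be right-continuous and piecewise continuous. If $$D^{+}\omega(t)\le -\theta(\omega(t))+\eta(t)\quad\text{for all } t\in[t_0,t_0+\tau),$$ then $$\omega(t)\le \beta(\omega(t_0),t-t_0)+2\int_{t_0}^{t}\eta(s)\,ds\quad\text{for all } t\in[t_0,t_0+\tau).$$
   Context: $D^+$ denotes the right upper Dini derivative: $D^+\omega(t)=\limsup_{h\to0^+}\frac{\omega(t+h)-\omega(t)}{h}$. Comparison functions: $\mathcal{P}$ is the set of continuous $\gamma:\mathbb{R}_+\to\mathbb{R}_+$ with $\gamma(0)=0$ and $\gamma(r)>0$ for $r>0$. $\mathcal{K}$ is the set of strictly increasing $\gamma\in\mathcal{P}$. $\mathcal{L}$ is the set of continuous, strictly decreasing $\gamma:\mathbb{R}_+\to\mathbb{R}_+$ with limit $0$ at $\infty$. $\mathcal{KL}$ is the set of continuous $\beta:\mathbb{R}_+^2\to\mathbb{R}_+$ such that $\beta(\cdot,t)\in\mathcal{K}$ for all $t\ge0$ and $\beta(r,\cdot)\in\mathcal{L}$ for all $r>0$. *)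

theory Defs
  imports "HOL-Analysis.Analysis"
begin

text \<open>Comparison functions, as functions real \<Rightarrow> real considered on the domain {0..} = R_+.\<close>

definition class_P :: "(real \<Rightarrow> real) set" where
  "class_P = {\<gamma>. continuous_on {0..} \<gamma> \<and> \<gamma> 0 = 0 \<and> (\<forall>r>0. \<gamma> r > 0)}"

definition class_K :: "(real \<Rightarrow> real) set" where
  "class_K = {\<gamma>. \<gamma> \<in> class_P \<and> strict_mono_on {0..} \<gamma>}"

definition class_L :: "(real \<Rightarrow> real) set" where
  "class_L = {\<gamma>. continuous_on {0..} \<gamma> \<and> (\<forall>r\<ge>0. \<gamma> r \<ge> 0)
      \<and> (\<forall>r s. 0 \<le> r \<longrightarrow> r < s \<longrightarrow> \<gamma> s < \<gamma> r) \<and> (\<gamma> \<longlongrightarrow> 0) at_top}"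

definition class_KL :: "(real \<Rightarrow> real \<Rightarrow> real) set" where
  "class_KL = {\<beta>. continuous_on ({0..} \<times> {0..}) (\<lambda>(r, t). \<beta> r t)
      \<and> (\<forall>t\<ge>0. (\<lambda>r. \<beta> r t) \<in> class_K)
      \<and> (\<forall>r>0. (\<lambda>t. \<beta> r t) \<in> class_L)}"

definition dini_upper_right :: "(real \<Rightarrow> real) \<Rightarrow> real \<Rightarrow> ereal" where
  "dini_upper_right \<omega> t = Limsup (at_right 0) (\<lambda>h. ereal ((\<omega> (t + h) - \<omega> t) / h))"

definition piecewise_continuous_on :: "real set \<Rightarrow> (real \<Rightarrow> real) \<Rightarrow> bool" where
  "piecewise_continuous_on I f \<longleftrightarrow>
     (\<forall>a b. {a..b} \<subseteq> I \<longrightarrow> finite {x\<in>{a..b}. \<not> continuous (at x within I) f})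
     \<and> (\<forall>x\<in>I. \<exists>l. (f \<longlongrightarrow> l) (at_right x))
     \<and> (\<forall>x\<in>I. (\<exists>y\<in>I. y < x) \<longrightarrow> (\<exists>l. (f \<longlongrightarrow> l) (at_left x)))"

definition right_continuous_on :: "real set \<Rightarrow> (real \<Rightarrow> real) \<Rightarrow> bool" where
  "right_continuous_on I f \<longleftrightarrow> (\<forall>x\<in>I. continuous (at_right x) f)"

end

theory Submission
  imports Defs
begin


lemma dini_bound:
  fixes f :: "real \<Rightarrow> real"
  assumes ab: "a \<le> b" and cont: "continuous_on {a..b} f"
    and H: "\<And>s e. s \<in> {a..<b} \<Longrightarrow> e > 0 \<Longrightarrow> \<forall>\<^sub>F h in at_right 0. f (s + h) - f s \<le> (e - c) * h"
  shows "f b \<le> f a - c * (b - a)"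
proof -
  have main: "f b \<le> f a - (c - e) * (b - a)" if e: "e > 0" for e
  proof -
    define P where "P x \<longleftrightarrow> f x \<le> f a - (c - e) * (x - a)" for x
    define S where "S = {s\<in>{a..b}. \<forall>x\<in>{a..s}. P x}"
    have aS: "a \<in> S" using ab by (auto simp: S_def P_def)
    have Sb: "\<And>s. s \<in> S \<Longrightarrow> s \<le> b" using ab by (auto simp: S_def)
    define m where "m = Sup S"
    have bdd: "bdd_above S" using Sb by (auto simp: bdd_above_def)
    have am: "a \<le> m" using aS bdd by (simp add: m_def cSup_upper)
    have mb: "m \<le> b" using aS Sb by (auto simp: m_def intro!: cSup_least)
    have Pbelow: "P x" if "a \<le> x" "x < m" for x
    proof -
      obtain s where "s \<in> S" "x < s" using \<open>x < m\<close> aS bdd unfolding m_def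
        by (metis less_cSup_iff empty_iff)
      then show ?thesis using that by (auto simp: S_def)
    qed
    have Pm: "P m"
    proof (cases "a = m")
      case True then show ?thesis by (simp add: P_def)
    next
      case False
      then have am': "a < m" using am by simp
      have c1: "continuous_on {a..m} f" using mb by (intro continuous_on_subset[OF cont]) auto
      then have "(f \<longlongrightarrow> f m) (at m within {a..m})"
        using am by (simp add: continuous_on_def)
      then have t1: "(f \<longlongrightarrow> f m) (at_left m)" using at_within_Icc_at_left[OF am'] by simp
      have t2: "((\<lambda>x. f a - (c - e) * (x - a)) \<longlongrightarrow> f a - (c - e) * (m - a)) (at_left m)"
        by (intro tendsto_intros)
      have ev: "\<forall>\<^sub>F x in at_left m. f x \<le> f a - (c - e) * (x - a)"
        unfolding eventually_at_left_field using am' Pbelow[unfolded P_def]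
        by (intro exI[of _ a]) auto
      show ?thesis unfolding P_def
        by (rule tendsto_le[OF _ t2 t1 ev]) simp
    qed
    have mS: "m \<in> S" using Pm Pbelow am mb by (auto simp: S_def) (metis atLeastAtMost_iff order_le_less)
    have "m = b"
    proof (rule ccontr)
      assume "m \<noteq> b"
      then have mb': "m < b" using mb by simp
      have "\<forall>\<^sub>F h in at_right 0. f (m + h) - f m \<le> (e - c) * h"
        using H[of m e] mb' am e by auto
      then obtain d where d: "d > 0" and dH: "\<And>h. 0 < h \<Longrightarrow> h < d \<Longrightarrow> f (m + h) - f m \<le> (e - c) * h"
        unfolding eventually_at_right_field by auto
      define h where "h = min d (b - m) / 2"
      have h0: "0 < h" "h < d" "m + h \<le> b" using d mb' by (auto simp: h_def min_def field_simps)
      have "m + h \<in> S"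
        unfolding S_def
      proof (safe)
        show "m + h \<in> {a..b}" using h0 am by auto
        fix x assume x: "x \<in> {a..m + h}"
        show "P x"
        proof (cases "x \<le> m")
          case True then show ?thesis using mS x by (auto simp: S_def)
        next
          case False
          then have "0 < x - m" "x - m < d" using x h0 by auto
          from dH[OF this] have "f x - f m \<le> (e - c) * (x - m)" by simp
          moreover have "f m \<le> f a - (c - e) * (m - a)" using Pm by (simp add: P_def)
          ultimately show ?thesis unfolding P_def by (simp add: algebra_simps)
        qed
      qed
      then have "m + h \<le> m" using bdd unfolding m_def by (rule cSup_upper)
      then show False using h0 by simp
    qed
    then show ?thesis using Pm by (simp add: P_def)
  qed
  show ?thesis
  proof (cases "a = b")
    case True then show ?thesis by simp
  next
    case False
    then have ba: "b - a > 0" using ab by simp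
    have "f b + c * (b - a) - f a \<le> e" if "e > 0" for e
    proof -
      have "(c - e / (b - a)) * (b - a) = c * (b - a) - e" using ba by (simp add: field_simps)
      then show ?thesis using main[of "e / (b - a)"] that ba by simp
    qed
    then show ?thesis by (smt (verit) field_le_epsilon)
  qed
qed



lemma pw_integrable_base:
  fixes f :: "real \<Rightarrow> real"
  assumes rc: "\<forall>x\<in>I. continuous (at_right x) f"
    and ll: "\<forall>x\<in>I. (\<exists>y\<in>I. y < x) \<longrightarrow> (\<exists>l. (f \<longlongrightarrow> l) (at_left x))"
    and sub: "{a..b} \<subseteq> I" and ab: "a < b"
    and int: "\<And>x. a < x \<Longrightarrow> x < b \<Longrightarrow> continuous (at x within I) f"
  shows "f integrable_on {a..b}"
proof -
  have "a \<in> I" "b \<in> I" using sub ab by auto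
  then obtain L where L: "(f \<longlongrightarrow> L) (at_left b)" using ll ab by blast
  define g where "g x = (if x = b then L else f x)" for x
  have "continuous_on {a..b} g"
    unfolding continuous_on_def
  proof safe
    fix x assume x: "x \<in> {a..b}"
    consider "x = b" | "x = a" | "a < x" "x < b" using x by force
    then show "(g \<longlongrightarrow> g x) (at x within {a..b})"
    proof cases
      case 1
      have ev: "\<forall>\<^sub>F y in at_left b. f y = g y"
        by (auto simp: g_def eventually_at_left_field intro!: exI[of _ a] ab)
      have "(g \<longlongrightarrow> L) (at_left b)" using tendsto_cong[OF ev] L by simp
      then show ?thesis using 1 at_within_Icc_at_left[OF ab] by (simp add: g_def)
    next
      case 2
      have ev: "\<forall>\<^sub>F y in at_right a. f y = g y"
        unfolding eventually_at_right_field g_def using ab by (intro exI[of _ b]) auto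
      have "(f \<longlongrightarrow> f a) (at_right a)" using rc \<open>a \<in> I\<close> by (simp add: continuous_within)
      then have "(g \<longlongrightarrow> f a) (at_right a)" using tendsto_cong[OF ev] by simp
      then show ?thesis using 2 at_within_Icc_at_right[OF ab] ab by (simp add: g_def)
    next
      case 3
      have "(f \<longlongrightarrow> f x) (at x within I)" using int[OF 3] by (simp add: continuous_within)
      then have "(f \<longlongrightarrow> f x) (at x)" using at_within_Icc_at[OF 3]
        by (metis sub tendsto_within_subset)
      moreover have "\<forall>\<^sub>F y in at x. f y = g y"
      proof -
        have "\<forall>\<^sub>F y in at x. y \<noteq> b" by (rule eventually_neq_at_within)
        then show ?thesis by eventually_elim (simp add: g_def)
      qed
      ultimately have "(g \<longlongrightarrow> f x) (at x)" using tendsto_cong by metis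
      then show ?thesis using 3 by (auto simp: g_def intro: tendsto_within_subset)
    qed
  qed
  then have "g integrable_on {a..b}" by (rule integrable_continuous_interval)
  then show ?thesis by (intro integrable_spike_finite[of "{b}" "{a..b}" f g]) (auto simp: g_def)
qed

lemma pw_integrable:
  fixes f :: "real \<Rightarrow> real"
  assumes rc: "\<forall>x\<in>I. continuous (at_right x) f"
    and ll: "\<forall>x\<in>I. (\<exists>y\<in>I. y < x) \<longrightarrow> (\<exists>l. (f \<longlongrightarrow> l) (at_left x))"
    and fin: "\<forall>a b. {a..b} \<subseteq> I \<longrightarrow> finite {x\<in>{a..b}. \<not> continuous (at x within I) f}"
  shows "{a..b} \<subseteq> I \<Longrightarrow> f integrable_on {a..b}"
proof (induction "card {x\<in>{a<..<b}. \<not> continuous (at x within I) f}" arbitrary: a b rule: less_induct)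
  case less
  define D where "D a b = {x\<in>{a<..<b}. \<not> continuous (at x within I) f}" for a b
  have finD: "finite (D a b)"
    by (rule finite_subset[OF _ fin[rule_format, OF less.prems]]) (auto simp: D_def)
  show ?case
  proof (cases "a < b")
    case False
    then show ?thesis by (intro has_integral_integrable[OF has_integral_null_real]) auto
  next
    case ab: True
    show ?thesis
    proof (cases "D a b = {}")
      case True
      show ?thesis
        by (rule pw_integrable_base[OF rc ll less.prems ab]) (use True in \<open>auto simp: D_def\<close>)
    next
      case False
      then obtain c where c: "c \<in> D a b" by auto
      then have ac: "a < c" "c < b" by (auto simp: D_def)
      have "D a c \<subseteq> D a b - {c}" "D c b \<subseteq> D a b - {c}" using ac by (auto simp: D_def)
      then have lt: "card (D a c) < card (D a b)" "card (D c b) < card (D a b)"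
        using c finD by (meson card_Diff1_less card_mono finite_Diff order_le_less_trans)+
      have "f integrable_on {a..c}"
        using less.hyps[OF lt(1)[unfolded D_def]] less.prems ac by (meson atLeastatMost_subset_iff order.trans order_less_imp_le order_refl)
      moreover have "f integrable_on {c..b}"
        using less.hyps[OF lt(2)[unfolded D_def]] less.prems ac by (meson atLeastatMost_subset_iff order.trans order_less_imp_le order_refl)
      ultimately show ?thesis using ac by (intro Henstock_Kurzweil_Integration.integrable_combine[of a c b]) auto
    qed
  qed
qed



lemma rho_exists:
  assumes th: "\<theta> \<in> class_P"
  shows "\<exists>\<rho>. continuous_on {0..1} \<rho> \<and> \<rho> 0 = 0 \<and> strict_mono_on {0..1} \<rho> \<and>
     (\<forall>y z. 0 < y \<longrightarrow> y \<le> 1 \<longrightarrow> y \<le> z \<longrightarrow> z \<le> 1 / y \<longrightarrow> \<rho> y \<le> \<theta> z)"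
proof -
  have thc: "continuous_on {0..} \<theta>" and th0: "\<theta> 0 = 0" and thp: "\<And>r. r > 0 \<Longrightarrow> \<theta> r > 0"
    using th by (auto simp: class_P_def)
  define k where "k y = (if y \<le> 0 then 0 else Inf (\<theta> ` {y..1/y}))" for y :: real
  have kmin: "\<exists>x\<in>{y..1/y}. k y = \<theta> x \<and> (\<forall>z\<in>{y..1/y}. \<theta> x \<le> \<theta> z)" if "0 < y" "y \<le> 1" for y
  proof -
    have "y * y \<le> 1 * 1" using that by (intro mult_mono) auto
    then have ne: "{y..1/y} \<noteq> {}" using that by (auto simp: field_simps)
    have "continuous_on {y..1/y} \<theta>" by (rule continuous_on_subset[OF thc]) (use that in auto)
    then obtain x where x: "x \<in> {y..1/y}" "\<forall>z\<in>{y..1/y}. \<theta> x \<le> \<theta> z"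
      using continuous_attains_inf[OF compact_Icc ne] by blast
    have "Inf (\<theta> ` {y..1/y}) = \<theta> x"
      by (rule cInf_eq_minimum) (use x in auto)
    then show ?thesis using x that by (auto simp: k_def)
  qed
  have kpos: "k y > 0" if "0 < y" "y \<le> 1" for y
    using kmin[OF that] thp that by force
  have kle: "k y \<le> \<theta> z" if "0 < y" "y \<le> 1" "y \<le> z" "z \<le> 1/y" for y z
    using kmin[OF that(1,2)] that by force
  have kmono: "k y1 \<le> k y2" if yy: "y1 \<le> y2" "y2 \<le> 1" for y1 y2
  proof (cases "y1 \<le> 0")
    case True then show ?thesis using kpos[of y2] that by (cases "y2 \<le> 0") (auto simp: k_def)
  next
    case False
    then have "0 < y1" "0 < y2" using that by auto
    obtain x where x: "x \<in> {y2..1/y2}" "k y2 = \<theta> x" using kmin[of y2] \<open>0 < y2\<close> yy by blast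
    have "1/y2 \<le> 1/y1" using \<open>0 < y1\<close> yy by (simp add: frac_le)
    then have "x \<in> {y1..1/y1}" using x yy by auto
    then show ?thesis using kle[of y1 x] \<open>0 < y1\<close> yy x by auto
  qed
  have knn: "k y \<ge> 0" if "y \<le> 1" for y
    using kpos[of y] that by (cases "y \<le> 0") (auto simp: k_def)
  have kmon: "mono_on {a..b} k" if "b \<le> 1" for a b
    using that by (auto simp: mono_on_def intro!: kmono)
  have kint: "k integrable_on {a..b}" if "b \<le> 1" for a b
    using kmon[OF that] by (rule integrable_on_mono_on)
  define \<rho> where "\<rho> y = integral {0..y} k" for y
  have cont: "continuous_on {0..1} \<rho>"
    unfolding \<rho>_def by (rule indefinite_integral_continuous_1[OF kint]) simp
  have r0: "\<rho> 0 = 0" by (simp add: \<rho>_def)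
  have diff: "\<rho> y2 - \<rho> y1 = integral {y1..y2} k" if "0 \<le> y1" "y1 \<le> y2" "y2 \<le> 1" for y1 y2
    using Henstock_Kurzweil_Integration.integral_combine[of 0 y1 y2 k] kint[of y2 0] that
    by (simp add: \<rho>_def)
  have smono: "strict_mono_on {0..1} \<rho>"
  proof (rule strict_mono_onI)
    fix y1 y2 :: real assume y: "y1 \<in> {0..1}" "y2 \<in> {0..1}" "y1 < y2"
    define m where "m = (y1 + y2) / 2"
    have m: "y1 < m" "m < y2" "0 < m" using y by (auto simp: m_def)
    have "integral {y1..y2} k = integral {y1..m} k + integral {m..y2} k"
      using Henstock_Kurzweil_Integration.integral_combine[of y1 m y2 k] kint[of y2 y1] y m by simp
    moreover have "integral {y1..m} k \<ge> 0"
      by (rule integral_nonneg[OF kint]) (use y m knn in auto)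
    moreover have "integral {m..y2} k \<ge> integral {m..y2} (\<lambda>_. k m)"
      by (rule integral_le[OF _ kint]) (use y m kmono in auto)
    moreover have "integral {m..y2} (\<lambda>_. k m) > 0"
      using kpos[of m] m y by simp
    ultimately have "integral {y1..y2} k > 0" by linarith
    then show "\<rho> y1 < \<rho> y2" using diff[of y1 y2] y by auto
  qed
  have bound: "\<rho> y \<le> \<theta> z" if "0 < y" "y \<le> 1" "y \<le> z" "z \<le> 1 / y" for y z
  proof -
    have "\<rho> y \<le> integral {0..y} (\<lambda>_. k y)"
      unfolding \<rho>_def by (rule integral_le[OF kint]) (use that kmono in auto)
    also have "\<dots> = y * k y" using that by simp
    also have "\<dots> \<le> k y" using that kpos[of y] by (simp add: mult_le_cancel_right1)
    also have "\<dots> \<le> \<theta> z" using kle that by auto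
    finally show ?thesis .
  qed
  show ?thesis using cont r0 smono bound by blast
qed



lemma inv_exists:
  fixes \<rho> :: "real \<Rightarrow> real"
  assumes cont: "continuous_on {0..1} \<rho>" and r0: "\<rho> 0 = 0" and sm: "strict_mono_on {0..1} \<rho>"
  shows "\<exists>F. \<rho> 1 > 0 \<and> continuous_on {0..\<rho> 1} F \<and> F 0 = 0 \<and>
     (\<forall>w\<in>{0..\<rho> 1}. F w \<in> {0..1} \<and> \<rho> (F w) = w) \<and>
     (\<forall>w1 w2. 0 \<le> w1 \<longrightarrow> w1 \<le> w2 \<longrightarrow> w2 \<le> \<rho> 1 \<longrightarrow> F w1 \<le> F w2) \<and>
     (\<forall>y w. 0 \<le> y \<longrightarrow> y \<le> 1 \<longrightarrow> \<rho> y \<le> w \<longrightarrow> w \<le> \<rho> 1 \<longrightarrow> y \<le> F w)"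
proof -
  have inj: "inj_on \<rho> {0..1}" using sm by (rule strict_mono_on_imp_inj_on)
  have r1: "\<rho> 1 > 0" using strict_mono_onD[OF sm, of 0 1] r0 by simp
  have rnn: "0 \<le> \<rho> y" "\<rho> y \<le> \<rho> 1" if "0 \<le> y" "y \<le> 1" for y
  proof -
    show "0 \<le> \<rho> y" using strict_mono_onD[OF sm, of 0 y] r0 that by (cases "y = 0") auto
    show "\<rho> y \<le> \<rho> 1" using strict_mono_onD[OF sm, of y 1] that by (cases "y = 1") auto
  qed
  have img: "\<rho> ` {0..1} = {0..\<rho> 1}"
  proof
    show "\<rho> ` {0..1} \<subseteq> {0..\<rho> 1}"
      using rnn by auto
    show "{0..\<rho> 1} \<subseteq> \<rho> ` {0..1}"
    proof
      fix w assume "w \<in> {0..\<rho> 1}"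
      then obtain x where "0 \<le> x" "x \<le> 1" "\<rho> x = w" using IVT'[of \<rho> 0 w 1] cont r0 by auto
      then show "w \<in> \<rho> ` {0..1}" by auto
    qed
  qed
  define F where "F = the_inv_into {0..1} \<rho>"
  have Fc: "continuous_on {0..\<rho> 1} F"
    using continuous_on_inv_into[OF cont compact_Icc inj] img by (simp add: F_def)
  have Fin: "F w \<in> {0..1} \<and> \<rho> (F w) = w" if "w \<in> {0..\<rho> 1}" for w
  proof -
    have "w \<in> \<rho> ` {0..1}" using that img by simp
    have "the_inv_into {0..1} \<rho> w \<in> {0..1}" using the_inv_into_into[OF inj, of w "{0..1}"] \<open>w \<in> \<rho> ` {0..1}\<close> by simp
    moreover have "\<rho> (the_inv_into {0..1} \<rho> w) = w" using f_the_inv_into_f[OF inj, of w] \<open>w \<in> \<rho> ` {0..1}\<close> by simp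
    ultimately show ?thesis by (simp add: F_def)
  qed
  have F0: "F 0 = 0" using the_inv_into_f_f[OF inj, of 0] r0 by (simp add: F_def)
  have key: "y \<le> F w" if "0 \<le> y" "y \<le> 1" "\<rho> y \<le> w" "w \<le> \<rho> 1" for y w
  proof (rule ccontr)
    assume "\<not> y \<le> F w"
    moreover have "0 \<le> w" using rnn[of y] that by linarith
    ultimately have "\<rho> (F w) < \<rho> y" using Fin[of w] that
      by (intro strict_mono_onD[OF sm]) auto
    then show False using Fin[of w] that \<open>0 \<le> w\<close> by auto
  qed
  have Fm: "F w1 \<le> F w2" if "0 \<le> w1" "w1 \<le> w2" "w2 \<le> \<rho> 1" for w1 w2
    using key[of "F w1" w2] Fin[of w1] that by auto
  show ?thesis using r1 Fc F0 Fin Fm key by blast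
qed



lemma beta_KL:
  fixes F :: "real \<Rightarrow> real" and c :: real
  assumes c: "c > 0" and Fc: "continuous_on {0..c} F" and F0: "F 0 = 0"
    and Fr: "\<forall>w\<in>{0..c}. F w \<in> {0..1}"
    and Fm: "\<forall>w1 w2. 0 \<le> w1 \<longrightarrow> w1 \<le> w2 \<longrightarrow> w2 \<le> c \<longrightarrow> F w1 \<le> F w2"
  shows "(\<lambda>r t. min r ((2*r+1)^2 * F (min c ((r+c)/(t+1)))) + r * exp(-t)) \<in> class_KL"
proof -
  define W where "W r t = min c ((r+c)/(t+1))" for r t :: real
  define \<beta> where "\<beta> r t = min r ((2*r+1)^2 * F (W r t)) + r * exp(-t)" for r t
  have Wr: "W r t \<in> {0..c}" if "r \<ge> 0" "t \<ge> 0" for r t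
    using that c by (auto simp: W_def)
  have FWnn: "F (W r t) \<ge> 0" if "r \<ge> 0" "t \<ge> 0" for r t
    using Fr Wr[OF that] by auto
  have Wmono_r: "W r1 t \<le> W r2 t" if "0 \<le> r1" "r1 \<le> r2" "t \<ge> 0" for r1 r2 t
  proof -
    have "(r1 + c) / (t + 1) \<le> (r2 + c) / (t + 1)" using that by (intro divide_right_mono) auto
    then show ?thesis by (auto simp: W_def)
  qed
  have Wmono_t: "W r t2 \<le> W r t1" if "0 \<le> r" "0 \<le> t1" "t1 \<le> t2" for r t1 t2
  proof -
    have "(r + c) / (t2 + 1) \<le> (r + c) / (t1 + 1)" using that c by (intro divide_left_mono) auto
    then show ?thesis by (auto simp: W_def)
  qed
  have Wc: "continuous_on S (\<lambda>p. W (fst p) (snd p))" if "S \<subseteq> {0..} \<times> {0..}" for S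
  proof -
    have "\<forall>p\<in>S. snd p + 1 \<noteq> 0" using that by force
    then show ?thesis unfolding W_def by (intro continuous_intros) auto
  qed
  have FWc: "continuous_on ({0..} \<times> {0..}) (\<lambda>p. F (W (fst p) (snd p)))"
    by (rule continuous_on_compose2[OF Fc Wc]) (auto intro: Wr)
  have bc: "continuous_on ({0..} \<times> {0..}) (\<lambda>p. \<beta> (fst p) (snd p))"
    unfolding \<beta>_def by (intro continuous_intros FWc)
  have bc_r: "continuous_on {0..} (\<lambda>r. \<beta> r t)" if "t \<ge> 0" for t
  proof -
    have "continuous_on {0..} (\<lambda>r. (r, t))" by (intro continuous_intros)
    then have "continuous_on {0..} ((\<lambda>p. \<beta> (fst p) (snd p)) \<circ> (\<lambda>r. (r, t)))"
      by (rule continuous_on_compose[OF _ continuous_on_subset[OF bc]]) (use that in auto)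
    then show ?thesis by (simp add: o_def)
  qed
  have bc_t: "continuous_on {0..} (\<lambda>t. \<beta> r t)" if "r \<ge> 0" for r
  proof -
    have "continuous_on {0..} (\<lambda>t. (r, t))" by (intro continuous_intros)
    then have "continuous_on {0..} ((\<lambda>p. \<beta> (fst p) (snd p)) \<circ> (\<lambda>t. (r, t)))"
      by (rule continuous_on_compose[OF _ continuous_on_subset[OF bc]]) (use that in auto)
    then show ?thesis by (simp add: o_def)
  qed
  have K: "(\<lambda>r. \<beta> r t) \<in> class_K" if t: "t \<ge> 0" for t
  proof -
    have "\<beta> 0 t = 0" using FWnn[of 0 t] t by (simp add: \<beta>_def)
    moreover have "\<beta> r t > 0" if "r > 0" for r
    proof -
      have "min r ((2*r+1)^2 * F (W r t)) \<ge> 0" using FWnn[of r t] that t by simp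
      moreover have "r * exp (-t) > 0" using that by simp
      ultimately show ?thesis unfolding \<beta>_def by linarith
    qed
    moreover have "strict_mono_on {0..} (\<lambda>r. \<beta> r t)"
    proof (rule strict_mono_onI)
      fix r1 r2 :: real assume r: "r1 \<in> {0..}" "r2 \<in> {0..}" "r1 < r2"
      have "F (W r1 t) \<le> F (W r2 t)"
        using Fm Wmono_r[of r1 r2 t] Wr[of r1 t] Wr[of r2 t] r t by auto
      moreover have "(2*r1+1)^2 \<le> (2*r2+1)^2" using r by (intro power_mono) auto
      ultimately have "(2*r1+1)^2 * F (W r1 t) \<le> (2*r2+1)^2 * F (W r2 t)"
        using FWnn[of r1 t] r t by (intro mult_mono) auto
      then have "min r1 ((2*r1+1)^2 * F (W r1 t)) \<le> min r2 ((2*r2+1)^2 * F (W r2 t))"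
        using r by linarith
      moreover have "r1 * exp (-t) < r2 * exp (-t)" using r by simp
      ultimately show "\<beta> r1 t < \<beta> r2 t" unfolding \<beta>_def by linarith
    qed
    ultimately show ?thesis using bc_r[OF t] by (auto simp: class_K_def class_P_def)
  qed
  have L: "(\<lambda>t. \<beta> r t) \<in> class_L" if r: "r > 0" for r
  proof -
    have nn: "\<beta> r t \<ge> 0" if "t \<ge> 0" for t
      using FWnn[of r t] that r by (simp add: \<beta>_def)
    have sd: "\<beta> r t2 < \<beta> r t1" if "0 \<le> t1" "t1 < t2" for t1 t2
    proof -
      have "F (W r t2) \<le> F (W r t1)"
        using Fm Wmono_t[of r t1 t2] Wr[of r t1] Wr[of r t2] r that by auto
      then have "(2*r+1)^2 * F (W r t2) \<le> (2*r+1)^2 * F (W r t1)"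
        by (intro mult_left_mono) auto
      then have "min r ((2*r+1)^2 * F (W r t2)) \<le> min r ((2*r+1)^2 * F (W r t1))"
        by linarith
      moreover have "r * exp (-t2) < r * exp (-t1)" using r that by simp
      ultimately show ?thesis unfolding \<beta>_def by linarith
    qed
    have lim: "((\<lambda>t. \<beta> r t) \<longlongrightarrow> 0) at_top"
    proof -
      have "LIM t at_top. 1 + (t::real) :> at_top"
        using filterlim_tendsto_add_at_top[OF tendsto_const[of "1::real" at_top] filterlim_ident] by simp
      then have "LIM t at_top. (t::real) + 1 :> at_infinity"
        by (simp add: add.commute filterlim_at_top_imp_at_infinity)
      then have l1: "((\<lambda>t. (r + c) / (t + 1)) \<longlongrightarrow> 0) at_top"
        by (rule tendsto_divide_0[OF tendsto_const])
      have l2: "((\<lambda>t. W r t) \<longlongrightarrow> 0) at_top"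
        unfolding W_def using tendsto_min[OF tendsto_const l1, of c] c by simp
      have ev: "\<forall>\<^sub>F t in at_top. W r t \<in> {0..c}"
        using eventually_ge_at_top[of "0::real"] by eventually_elim (use Wr r in auto)
      have l3: "((\<lambda>t. F (W r t)) \<longlongrightarrow> 0) at_top"
        using continuous_on_tendsto_compose[OF Fc l2 _ ev] c F0 by simp
      have l4: "((\<lambda>t. min r ((2*r+1)^2 * F (W r t))) \<longlongrightarrow> 0) at_top"
        using tendsto_min[OF tendsto_const tendsto_mult[OF tendsto_const l3], of r "(2*r+1)^2"] r by simp
      have "((\<lambda>t. exp (-t)) \<longlongrightarrow> (0::real)) at_top"
        by (rule filterlim_compose[OF exp_at_bot filterlim_uminus_at_bot_at_top])
      then have l5: "((\<lambda>t. r * exp (-t)) \<longlongrightarrow> 0) at_top"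
        using tendsto_mult[OF tendsto_const, of _ 0 at_top r] by simp
      show ?thesis unfolding \<beta>_def using tendsto_add[OF l4 l5] by simp
    qed
    show ?thesis using bc_t[of r] r nn sd lim by (auto simp: class_L_def)
  qed
  have "(\<lambda>(r, t). \<beta> r t) = (\<lambda>p. \<beta> (fst p) (snd p))" by auto
  then have "\<beta> \<in> class_KL" using bc K L by (auto simp: class_KL_def)
  then show ?thesis by (simp add: \<beta>_def[abs_def] W_def[abs_def])
qed



lemma traj:
  fixes \<omega> \<eta> \<theta> :: "real \<Rightarrow> real"
  assumes t0t: "t0 \<le> t" and sub: "{t0..t} \<subseteq> I"
    and \<omega>c: "continuous_on I \<omega>" and \<omega>nn: "\<forall>s\<in>I. \<omega> s \<ge> 0" and \<eta>nn: "\<forall>s\<in>I. \<eta> s \<ge> 0"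
    and rc: "\<forall>x\<in>I. continuous (at_right x) \<eta>"
    and \<eta>int: "\<eta> integrable_on {t0..t}"
    and dini: "\<forall>s\<in>I. dini_upper_right \<omega> s \<le> ereal (- \<theta> (\<omega> s) + \<eta> s)"
    and \<theta>nn: "\<forall>r\<ge>0. \<theta> r \<ge> 0"
  shows "\<omega> t \<le> 2 * integral {t0..t} \<eta> \<or>
    (0 < \<omega> t - integral {t0..t} \<eta> \<and> \<omega> t - integral {t0..t} \<eta> \<le> \<omega> t0 \<and>
     (\<forall>m. (\<forall>z\<in>{\<omega> t - integral {t0..t} \<eta>..2 * \<omega> t0}. m \<le> \<theta> z) \<longrightarrow>
        \<omega> t - integral {t0..t} \<eta> + m * (t - t0) \<le> \<omega> t0))"
proof -
  define E where "E s = integral {t0..s} \<eta>" for s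
  define u where "u s = \<omega> s - E s" for s
  have intsub: "\<eta> integrable_on {a..b}" if "t0 \<le> a" "b \<le> t" for a b
    by (cases "a \<le> b") (use integrable_subinterval_real[OF \<eta>int] that in auto)
  have Ediff: "E s2 - E s1 = integral {s1..s2} \<eta>" if "t0 \<le> s1" "s1 \<le> s2" "s2 \<le> t" for s1 s2
    using Henstock_Kurzweil_Integration.integral_combine[of t0 s1 s2 \<eta>] intsub[of t0 s2] that
    by (simp add: E_def)
  have intnn: "integral {a..b} \<eta> \<ge> 0" if "t0 \<le> a" "b \<le> t" for a b
  proof (rule integral_nonneg[OF intsub[OF that]])
    fix x assume "x \<in> {a..b}"
    then have "x \<in> I" using sub that by auto
    then show "0 \<le> \<eta> x" using \<eta>nn by auto
  qed
  have E0: "E t0 = 0" by (simp add: E_def)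
  have Enn: "E s \<ge> 0" if "s \<le> t" for s using intnn[of t0 s] that by (simp add: E_def)
  have Emono: "E s1 \<le> E s2" if "t0 \<le> s1" "s1 \<le> s2" "s2 \<le> t" for s1 s2
    using Ediff[OF that] intnn[of s1 s2] that by simp
  have uc: "continuous_on {t0..t} u"
  proof -
    have "continuous_on {t0..t} \<omega>" using continuous_on_subset[OF \<omega>c sub] .
    moreover have "continuous_on {t0..t} E"
      unfolding E_def by (rule indefinite_integral_continuous_1[OF \<eta>int])
    ultimately show ?thesis unfolding u_def by (intro continuous_intros)
  qed
  have step: "\<forall>\<^sub>F h in at_right 0. u (s + h) - u s \<le> (e - \<theta> (\<omega> s)) * h"
    if s: "t0 \<le> s" "s < t" and e: "e > 0" for s e
  proof -
    have sI: "s \<in> I" using s sub by auto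
    define q where "q = - \<theta> (\<omega> s) + \<eta> s"
    have "Limsup (at_right 0) (\<lambda>h. ereal ((\<omega> (s + h) - \<omega> s) / h)) < ereal (q + e/2)"
    proof -
      have "Limsup (at_right 0) (\<lambda>h. ereal ((\<omega> (s + h) - \<omega> s) / h)) \<le> ereal q"
        using dini sI unfolding dini_upper_right_def q_def by auto
      also have "ereal q < ereal (q + e/2)" using e by simp
      finally show ?thesis .
    qed
    from Limsup_lessD[OF this] have ev1: "\<forall>\<^sub>F h in at_right 0. (\<omega> (s + h) - \<omega> s) / h < q + e/2"
      by simp
    have "(\<eta> \<longlongrightarrow> \<eta> s) (at_right s)" using rc sI by (simp add: continuous_within)
    then have "\<forall>\<^sub>F y in at_right s. \<eta> y > \<eta> s - e/2"
      using e by (intro order_tendstoD) auto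
    then obtain b where b: "b > s" "\<And>y. s < y \<Longrightarrow> y < b \<Longrightarrow> \<eta> y > \<eta> s - e/2"
      unfolding eventually_at_right_field by auto
    have ev2: "\<forall>\<^sub>F h in at_right 0. 0 < h \<and> h < b - s \<and> h < t - s"
      unfolding eventually_at_right_field using b s
      by (intro exI[of _ "min (b - s) (t - s)"]) auto
    show ?thesis
      using ev1 ev2
    proof eventually_elim
      case (elim h)
      have h: "0 < h" "h < b - s" "h < t - s" using elim by auto
      have "\<omega> (s + h) - \<omega> s < (q + e/2) * h" using elim h by (simp add: field_simps)
      moreover have "E (s + h) - E s \<ge> (\<eta> s - e/2) * h"
      proof -
        have "integral {s..s+h} (\<lambda>_. \<eta> s - e/2) \<le> integral {s..s+h} \<eta>"
          by (rule integral_le[OF _ intsub]) (use b h s e in \<open>auto simp: le_less\<close>)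
        then show ?thesis using Ediff[of s "s + h"] h s by (simp add: mult.commute)
      qed
      ultimately show ?case unfolding u_def q_def by (simp add: algebra_simps)
    qed
  qed
  have umono: "u s2 \<le> u s1" if "t0 \<le> s1" "s1 \<le> s2" "s2 \<le> t" for s1 s2
  proof -
    have "u s2 \<le> u s1 - 0 * (s2 - s1)"
    proof (rule dini_bound)
      show "continuous_on {s1..s2} u" using continuous_on_subset[OF uc] that by auto
      fix s e :: real assume se: "s \<in> {s1..<s2}" "e > 0"
      have "s \<in> {t0..t}" using se that by auto
      then have "s \<in> I" using sub by auto
      then have th: "\<theta> (\<omega> s) \<ge> 0" using \<theta>nn \<omega>nn by auto
      have "\<forall>\<^sub>F h in at_right (0::real). h > 0" by (simp add: eventually_at_right_less)
      with step[of s e] show "\<forall>\<^sub>F h in at_right 0. u (s + h) - u s \<le> (e - 0) * h"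
        using se that
      proof -
        have "\<forall>\<^sub>F h in at_right 0. u (s + h) - u s \<le> (e - \<theta> (\<omega> s)) * h"
          using step[of s e] se that by auto
        then show ?thesis using \<open>\<forall>\<^sub>F h in at_right (0::real). h > 0\<close>
          by eventually_elim (use th in \<open>smt (verit) mult_right_mono\<close>)
      qed
    qed (use that in auto)
    then show ?thesis by simp
  qed
  show ?thesis
  proof (cases "u t \<le> E t")
    case True
    then show ?thesis by (simp add: u_def E_def)
  next
    case False
    define x where "x = u t"
    have Et: "E t \<ge> 0" using Enn by simp
    have x0: "0 < x" using False Et by (simp add: x_def)
    have ut0: "u t0 = \<omega> t0" by (simp add: u_def E0)
    have xle: "x \<le> \<omega> t0" using umono[of t0 t] t0t ut0 by (simp add: x_def)
    have range: "\<omega> s \<in> {x..2 * \<omega> t0}" if "s \<in> {t0..t}" for s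
    proof -
      have "x \<le> u s" "u s \<le> \<omega> t0" using umono[of s t] umono[of t0 s] that ut0 by (auto simp: x_def)
      moreover have "0 \<le> E s" "E s \<le> E t" using Enn[of s] Emono[of s t] that by auto
      ultimately show ?thesis using False xle by (auto simp: u_def x_def)
    qed
    have "x + m * (t - t0) \<le> \<omega> t0" if m: "\<forall>z\<in>{x..2 * \<omega> t0}. m \<le> \<theta> z" for m
    proof -
      have "u t \<le> u t0 - m * (t - t0)"
      proof (rule dini_bound[OF t0t uc])
        fix s e :: real assume se: "s \<in> {t0..<t}" "e > 0"
        have th: "\<theta> (\<omega> s) \<ge> m" using m range[of s] se by auto
        have "\<forall>\<^sub>F h in at_right (0::real). h > 0" by (simp add: eventually_at_right_less)
        moreover have "\<forall>\<^sub>F h in at_right 0. u (s + h) - u s \<le> (e - \<theta> (\<omega> s)) * h"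
          using step[of s e] se by auto
        ultimately show "\<forall>\<^sub>F h in at_right 0. u (s + h) - u s \<le> (e - m) * h"
          by eventually_elim (use th in \<open>smt (verit) mult_right_mono\<close>)
      qed
      then show ?thesis using ut0 by (simp add: x_def)
    qed
    then show ?thesis using x0 xle by (auto simp: x_def u_def E_def)
  qed
qed



lemma beta_bound:
  fixes \<rho> F :: "real \<Rightarrow> real"
  assumes c: "c > 0"
    and key: "\<forall>y w. 0 \<le> y \<longrightarrow> y \<le> 1 \<longrightarrow> \<rho> y \<le> w \<longrightarrow> w \<le> c \<longrightarrow> y \<le> F w"
    and rb: "\<And>y. 0 \<le> y \<Longrightarrow> y \<le> 1 \<Longrightarrow> 0 \<le> \<rho> y \<and> \<rho> y \<le> c"
    and r: "r \<ge> 0" and \<tau>: "\<tau> \<ge> 0" and x: "0 < x" "x \<le> r"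
    and ineq: "x + \<rho> (x / (2*r+1)^2) * \<tau> \<le> r"
  shows "x \<le> min r ((2*r+1)^2 * F (min c ((r+c)/(\<tau>+1)))) + r * exp(-\<tau>)"
proof -
  define y where "y = x / (2*r+1)^2"
  define W where "W = min c ((r+c)/(\<tau>+1))"
  have pos: "(2*r+1)^2 > 0" using r by simp
  have "r \<le> (2*r+1)^2" using r by (simp add: power2_eq_square algebra_simps)
  then have y01: "0 \<le> y" "y \<le> 1" using x pos by (auto simp: y_def field_simps)
  have ry: "0 \<le> \<rho> y" "\<rho> y \<le> c" using rb[OF y01] by auto
  have "\<rho> y * \<tau> \<le> r" using ineq x by (simp add: y_def)
  then have "\<rho> y * (\<tau> + 1) \<le> r + c" using ry by (simp add: algebra_simps)
  then have "\<rho> y \<le> (r + c) / (\<tau> + 1)" using \<tau> by (simp add: pos_le_divide_eq)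
  then have "\<rho> y \<le> W" using ry by (simp add: W_def)
  moreover have "W \<le> c" by (simp add: W_def)
  ultimately have "y \<le> F W" using key y01 by blast
  then have "x \<le> (2*r+1)^2 * F W" using pos by (simp add: y_def field_simps)
  then have "x \<le> min r ((2*r+1)^2 * F W)" using x by simp
  moreover have "r * exp (-\<tau>) \<ge> 0" using r by simp
  ultimately show ?thesis unfolding W_def by linarith
qed


theorem mainTheorem2:
  fixes \<theta> :: "real \<Rightarrow> real"
  assumes "\<theta> \<in> class_P"
  shows "\<exists>\<beta>\<in>class_KL. \<forall>(t0::real) (\<tau>::ereal) (\<omega>::real \<Rightarrow> real) (\<eta>::real \<Rightarrow> real).
     let I = {t. t0 \<le> t \<and> ereal t < ereal t0 + \<tau>} in
     t0 \<ge> 0 \<longrightarrow> \<tau> > 0 \<longrightarrow>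
     continuous_on I \<omega> \<longrightarrow> (\<forall>t\<in>I. \<omega> t \<ge> 0) \<longrightarrow>
     (\<forall>t\<in>I. \<eta> t \<ge> 0) \<longrightarrow> right_continuous_on I \<eta> \<longrightarrow> piecewise_continuous_on I \<eta> \<longrightarrow>
     (\<forall>t\<in>I. dini_upper_right \<omega> t \<le> ereal (- \<theta> (\<omega> t) + \<eta> t)) \<longrightarrow>
     (\<forall>t\<in>I. \<omega> t \<le> \<beta> (\<omega> t0) (t - t0) + 2 * integral {t0..t} \<eta>)"
proof -
  have \<theta>nn: "\<forall>r\<ge>0. \<theta> r \<ge> 0"
  proof (intro allI impI)
    fix r :: real assume "r \<ge> 0"
    then show "\<theta> r \<ge> 0" using assms by (cases "r = 0") (auto simp: class_P_def intro: less_imp_le)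
  qed
  obtain \<rho> where \<rho>c: "continuous_on {0..1} \<rho>" and \<rho>0: "\<rho> 0 = 0" and \<rho>sm: "strict_mono_on {0..1} \<rho>"
    and \<rho>b: "\<forall>y z. 0 < y \<longrightarrow> y \<le> 1 \<longrightarrow> y \<le> z \<longrightarrow> z \<le> 1 / y \<longrightarrow> \<rho> y \<le> \<theta> z"
    using rho_exists[OF assms] by blast
  obtain F where c: "\<rho> 1 > 0" and Fc: "continuous_on {0..\<rho> 1} F" and F0: "F 0 = 0"
    and Fin: "\<forall>w\<in>{0..\<rho> 1}. F w \<in> {0..1} \<and> \<rho> (F w) = w"
    and Fm: "\<forall>w1 w2. 0 \<le> w1 \<longrightarrow> w1 \<le> w2 \<longrightarrow> w2 \<le> \<rho> 1 \<longrightarrow> F w1 \<le> F w2"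
    and key: "\<forall>y w. 0 \<le> y \<longrightarrow> y \<le> 1 \<longrightarrow> \<rho> y \<le> w \<longrightarrow> w \<le> \<rho> 1 \<longrightarrow> y \<le> F w"
    using inv_exists[OF \<rho>c \<rho>0 \<rho>sm] by blast
  define cc where "cc = \<rho> 1"
  define \<beta> where "\<beta> = (\<lambda>r t. min r ((2*r+1)^2 * F (min cc ((r+cc)/(t+1)))) + r * exp(-t))"
  have Fr: "\<forall>w\<in>{0..cc}. F w \<in> {0..1}" using Fin by (simp add: cc_def)
  have KL: "\<beta> \<in> class_KL" unfolding \<beta>_def
    by (rule beta_KL) (use c Fc F0 Fr Fm in \<open>auto simp: cc_def\<close>)
  have rb: "0 \<le> \<rho> y \<and> \<rho> y \<le> cc" if "0 \<le> y" "y \<le> 1" for y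
  proof -
    have "0 \<le> \<rho> y" using strict_mono_onD[OF \<rho>sm, of 0 y] \<rho>0 that by (cases "y = 0") auto
    moreover have "\<rho> y \<le> \<rho> 1" using strict_mono_onD[OF \<rho>sm, of y 1] that by (cases "y = 1") auto
    ultimately show ?thesis by (simp add: cc_def)
  qed
  have \<beta>nn: "\<beta> r t \<ge> 0" if "r \<ge> 0" "t \<ge> 0" for r t
  proof -
    have "min cc ((r+cc)/(t+1)) \<in> {0..cc}" using that c by (auto simp: cc_def)
    then have "F (min cc ((r+cc)/(t+1))) \<ge> 0" using Fr by auto
    then show ?thesis using that by (simp add: \<beta>_def)
  qed
  show ?thesis
  proof (rule bexI[OF _ KL], unfold Let_def, intro allI impI ballI)
    fix t0 :: real and \<tau> :: ereal and \<omega> \<eta> :: "real \<Rightarrow> real" and t :: real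
    define I where "I = {t. t0 \<le> t \<and> ereal t < ereal t0 + \<tau>}"
    assume t00: "0 \<le> t0" and "0 < \<tau>"
      and \<omega>c: "continuous_on {t. t0 \<le> t \<and> ereal t < ereal t0 + \<tau>} \<omega>"
      and \<omega>nn: "\<forall>t\<in>{t. t0 \<le> t \<and> ereal t < ereal t0 + \<tau>}. 0 \<le> \<omega> t"
      and \<eta>nn: "\<forall>t\<in>{t. t0 \<le> t \<and> ereal t < ereal t0 + \<tau>}. 0 \<le> \<eta> t"
      and rc: "right_continuous_on {t. t0 \<le> t \<and> ereal t < ereal t0 + \<tau>} \<eta>"
      and pc: "piecewise_continuous_on {t. t0 \<le> t \<and> ereal t < ereal t0 + \<tau>} \<eta>"
      and dini: "\<forall>t\<in>{t. t0 \<le> t \<and> ereal t < ereal t0 + \<tau>}. dini_upper_right \<omega> t \<le> ereal (- \<theta> (\<omega> t) + \<eta> t)"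
      and tI: "t \<in> {t. t0 \<le> t \<and> ereal t < ereal t0 + \<tau>}"
    note hyps = \<omega>c \<omega>nn \<eta>nn rc pc dini tI
    note hyps = hyps[folded I_def]
    have t0t: "t0 \<le> t" using tI by simp
    have sub: "{t0..t} \<subseteq> I"
    proof
      fix s assume s: "s \<in> {t0..t}"
      then have "ereal s \<le> ereal t" by simp
      also have "ereal t < ereal t0 + \<tau>" using tI by simp
      finally show "s \<in> I" using s by (simp add: I_def)
    qed
    have \<eta>int: "\<eta> integrable_on {t0..t}"
      using pw_integrable[of I \<eta> t0 t] hyps(4,5) sub
      unfolding right_continuous_on_def piecewise_continuous_on_def by blast
    have Enn: "integral {t0..t} \<eta> \<ge> 0"
      by (rule integral_nonneg[OF \<eta>int]) (use hyps(3) sub in auto)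
    have r0: "\<omega> t0 \<ge> 0" using hyps(2) sub t0t by auto
    have \<beta>0: "\<beta> (\<omega> t0) (t - t0) \<ge> 0" using \<beta>nn r0 t0t by simp
    from traj[OF t0t sub hyps(1,2,3) hyps(4)[unfolded right_continuous_on_def] \<eta>int hyps(6) \<theta>nn]
    consider "\<omega> t \<le> 2 * integral {t0..t} \<eta>"
      | "0 < \<omega> t - integral {t0..t} \<eta>" "\<omega> t - integral {t0..t} \<eta> \<le> \<omega> t0"
        "\<forall>m. (\<forall>z\<in>{\<omega> t - integral {t0..t} \<eta>..2 * \<omega> t0}. m \<le> \<theta> z) \<longrightarrow>
          \<omega> t - integral {t0..t} \<eta> + m * (t - t0) \<le> \<omega> t0"
      by blast
    then show "\<omega> t \<le> \<beta> (\<omega> t0) (t - t0) + 2 * integral {t0..t} \<eta>"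
    proof cases
      case 1
      then show ?thesis using \<beta>0 by linarith
    next
      case 2
      define x where "x = \<omega> t - integral {t0..t} \<eta>"
      define r where "r = \<omega> t0"
      define y where "y = x / (2*r+1)^2"
      have x: "0 < x" "x \<le> r" using 2 by (auto simp: x_def r_def)
      have pos: "(2*r+1)^2 > 0" using r0 by (simp add: r_def)
      have rle: "r \<le> (2*r+1)^2" using r0 by (simp add: r_def power2_eq_square algebra_simps)
      have "1 \<le> (2*r+1)^2" using r0 by (simp add: r_def power2_eq_square algebra_simps)
      then have yx: "y \<le> x" using x by (simp add: y_def field_simps)
      have y01: "0 < y" "y \<le> 1" using x pos rle by (auto simp: y_def field_simps)
      have "2 * r * x \<le> (2*r+1)^2"
      proof -
        have "2 * r * x \<le> 2 * r * r" using x r0 by (simp add: r_def mult_left_mono)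
        also have "\<dots> \<le> (2*r+1)^2" using r0 by (simp add: r_def power2_eq_square algebra_simps)
        finally show ?thesis .
      qed
      then have "2 * r \<le> 1 / y" using x pos by (simp add: y_def field_simps)
      then have "\<forall>z\<in>{x..2 * r}. \<rho> y \<le> \<theta> z" using \<rho>b y01 yx by auto
      then have "x + \<rho> y * (t - t0) \<le> r" using 2(3) by (simp add: x_def r_def)
      then have "x \<le> \<beta> r (t - t0)" unfolding \<beta>_def
        by (intro beta_bound[of cc \<rho> F]) (use c key rb r0 x t0t in \<open>auto simp: cc_def r_def y_def\<close>)
      then show ?thesis using Enn by (simp add: x_def r_def)
    qed
  qed
qed

end
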